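(* Let $p\in(-1,\infty)$, $\beta\ge0$, and $\gamma_*>0$ satisfy: - $\gamma_*\in[(1+\beta)^{-p},1]$ if $p\ge0$; - $\gamma_*\in[1,(1+\beta)^{-p}]$ if $p\le0$. For $\alpha\in(0,1)$, let $\omega_1^*(\alpha,\gamma_* )$ denote the first component of the unique solution $(\omega_1,\omega_2)$, with $0<\omega_1\le\omega_2$, of the system $$\alpha\,\omega_1+(1-\alpha)\,\omega_2=1+\beta,\qquad \frac{\alpha}{\omega_1^{p+1}}+\frac{1-\alpha}{\omega_2^{p+1}}=\gamma_*.$$ Then $\alpha\mapsto\omega_1^*(\alpha,\gamma_* )$ is non-decreasing on $(0,1)$.
   Context: The system in the claim has, for every $\alpha\in(0,1)$ and every $\beta$, $\gamma_*$ as stated, exactly one solution with $0<\omega_1\le\omega_2$, so $\omega_1^*(\alpha,\gamma_* )$ is well defined. *)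

theory Defs
  imports Complex_Main
begin

definition omega_system :: "real \<Rightarrow> real \<Rightarrow> real \<Rightarrow> real \<Rightarrow> real \<Rightarrow> real \<Rightarrow> bool" where
  "omega_system p \<beta> \<gamma> \<alpha> w1 w2 \<longleftrightarrow>
     0 < w1 \<and> w1 \<le> w2 \<and>
     \<alpha> * w1 + (1 - \<alpha>) * w2 = 1 + \<beta> \<and>
     \<alpha> / w1 powr (p + 1) + (1 - \<alpha>) / w2 powr (p + 1) = \<gamma>"

definition omega1_star :: "real \<Rightarrow> real \<Rightarrow> real \<Rightarrow> real \<Rightarrow> real" where
  "omega1_star p \<beta> \<gamma> \<alpha> = fst (THE w. omega_system p \<beta> \<gamma> \<alpha> (fst w) (snd w))"

end

theory Submission
  imports Defs
begin

lemma chord: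
  fixes q a b c d :: real
  assumes q: "q > 0" and ab: "0 < a" "a < b" "b \<le> c" "c < d"
  shows "(b powr (-q) - a powr (-q)) * (d - c) < (d powr (-q) - c powr (-q)) * (b - a)"
proof -
  have der: "\<And>x. 0 < x \<Longrightarrow> DERIV (\<lambda>z. z powr (-q)) x :> (-q) * x powr (-q - 1)"
    by (rule has_real_derivative_powr)
  obtain z1 where z1: "a < z1" "z1 < b" "b powr (-q) - a powr (-q) = (b - a) * ((-q) * z1 powr (-q - 1))"
    using MVT2[of a b "\<lambda>z. z powr (-q)" "\<lambda>x. (-q) * x powr (-q - 1)"] ab der by force
  obtain z2 where z2: "c < z2" "z2 < d" "d powr (-q) - c powr (-q) = (d - c) * ((-q) * z2 powr (-q - 1))"
    using MVT2[of c d "\<lambda>z. z powr (-q)" "\<lambda>x. (-q) * x powr (-q - 1)"] ab der by force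
  have "z2 powr (-q - 1) < z1 powr (-q - 1)"
    using powr_less_mono2_neg[of "-q-1" z1 z2] q z1 z2 ab by simp
  hence "(-q) * z1 powr (-q - 1) < (-q) * z2 powr (-q - 1)" using q by simp
  hence "(b - a) * (d - c) * ((-q) * z1 powr (-q - 1)) < (b - a) * (d - c) * ((-q) * z2 powr (-q - 1))"
    by (rule mult_strict_left_mono) (use ab in auto)
  thus ?thesis unfolding z1(3) z2(3) by (simp only: mult.commute mult.left_commute mult.assoc)
qed

definition VV :: "real \<Rightarrow> real \<Rightarrow> real \<Rightarrow> real" where
  "VV B a u = (B - a * u) / (1 - a)"

definition GG :: "real \<Rightarrow> real \<Rightarrow> real \<Rightarrow> real \<Rightarrow> real" where
  "GG q B a u = a * u powr (-q) + (1 - a) * (VV B a u) powr (-q)"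

lemma VV_eq: "0 < a \<Longrightarrow> a < 1 \<Longrightarrow> (1 - a) * VV B a u = B - a * u"
  by (simp add: VV_def)

lemma VV_ge: assumes "0 < a" "a < 1" "u \<le> B" shows "B \<le> VV B a u"
proof -
  have "(1 - a) * B \<le> B - a * u" using assms by (simp add: algebra_simps mult_left_mono)
  thus ?thesis using assms by (simp add: VV_def pos_le_divide_eq mult.commute)
qed

lemma VV_gt: assumes "0 < a" "a < 1" "u < B" shows "B < VV B a u"
proof -
  have "(1 - a) * B < B - a * u" using assms by (simp add: algebra_simps mult_strict_left_mono)
  thus ?thesis using assms by (simp add: VV_def pos_less_divide_eq mult.commute)
qed

lemma sys_iff:
  assumes "0 < a" "a < 1"
  shows "omega_system p \<beta> \<gamma> a w1 w2 \<longleftrightarrow>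
    (0 < w1 \<and> w1 \<le> 1 + \<beta> \<and> w2 = VV (1 + \<beta>) a w1 \<and> GG (p + 1) (1 + \<beta>) a w1 = \<gamma>)"
proof -
  have lin: "a * w1 + (1 - a) * w2 = 1 + \<beta> \<longleftrightarrow> w2 = VV (1 + \<beta>) a w1"
    using assms by (auto simp: VV_def field_simps)
  have le: "w2 = VV (1 + \<beta>) a w1 \<Longrightarrow> w1 \<le> w2 \<longleftrightarrow> w1 \<le> 1 + \<beta>"
  proof -
    assume w2: "w2 = VV (1 + \<beta>) a w1"
    have "w1 \<le> w2 \<longleftrightarrow> (1 - a) * w1 \<le> (1 - a) * w2" using assms by simp
    also have "\<dots> \<longleftrightarrow> w1 \<le> 1 + \<beta>" using VV_eq[OF assms, of "1+\<beta>" w1] w2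
      by (auto simp: algebra_simps)
    finally show ?thesis .
  qed
  have pw: "\<And>x. a / x powr (p + 1) = a * x powr (- (p + 1))"
    by (subst powr_minus_divide) simp
  have pw2: "\<And>x. (1 - a) / x powr (p + 1) = (1 - a) * x powr (- (p + 1))"
    by (subst powr_minus_divide) simp
  show ?thesis unfolding omega_system_def GG_def pw pw2 using lin le by blast
qed

lemma GG_dec:
  assumes q: "q > 0" and a: "0 < a" "a < 1" and xy: "0 < x" "x < y" "y \<le> B"
  shows "GG q B a y < GG q B a x"
proof -
  define vx where "vx = VV B a x"
  define vy where "vy = VV B a y"
  have hx: "(1 - a) * vx = B - a * x" using VV_eq[OF a] vx_def by simp
  have hy: "(1 - a) * vy = B - a * y" using VV_eq[OF a] vy_def by simp
  have vyB: "y \<le> vy" using VV_ge[OF a xy(3)] vy_def xy by simp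
  have rel: "a * (y - x) = (1 - a) * (vx - vy)" using hx hy by (simp add: algebra_simps)
  have "0 < a * (y - x)" using a xy by simp
  hence D1: "0 < vx - vy" using rel a by (simp add: zero_less_mult_iff)
  have ch: "(y powr (-q) - x powr (-q)) * (vx - vy) < (vx powr (-q) - vy powr (-q)) * (y - x)"
    using chord[OF q xy(1,2) vyB] D1 by simp
  have "a * ((y powr (-q) - x powr (-q)) * (vx - vy)) < a * ((vx powr (-q) - vy powr (-q)) * (y - x))"
    using ch a by simp
  also have "\<dots> = (vx powr (-q) - vy powr (-q)) * (a * (y - x))"
    by (simp only: mult_ac)
  also have "\<dots> = (vx powr (-q) - vy powr (-q)) * ((1 - a) * (vx - vy))"
    using rel by simp
  finally have "(a * (y powr (-q) - x powr (-q))) * (vx - vy) < ((1 - a) * (vx powr (-q) - vy powr (-q))) * (vx - vy)"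
    by (simp only: mult_ac)
  hence "a * (y powr (-q) - x powr (-q)) < (1 - a) * (vx powr (-q) - vy powr (-q))"
    using D1 by (simp add: mult_less_cancel_right)
  thus ?thesis unfolding GG_def vx_def[symmetric] vy_def[symmetric] by (simp add: algebra_simps)
qed

lemma GG_mono_a:
  assumes q: "q > 0" and u: "0 < u" "u \<le> B" and a: "0 < a1" "a1 < a2" "a2 < 1"
  shows "GG q B a1 u \<le> GG q B a2 u"
proof (cases "u = B")
  case True
  have "VV B a1 u = B" "VV B a2 u = B" using a True by (auto simp: VV_def field_simps)
  thus ?thesis using True by (simp add: GG_def algebra_simps)
next
  case False
  hence uB: "u < B" using u by simp
  have a1: "0 < a1" "a1 < 1" and a2: "0 < a2" "a2 < 1" using a by auto
  define v1 where "v1 = VV B a1 u"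
  define v2 where "v2 = VV B a2 u"
  have h1: "(1 - a1) * v1 = B - a1 * u" using VV_eq[OF a1] v1_def by simp
  have h2: "(1 - a2) * v2 = B - a2 * u" using VV_eq[OF a2] v2_def by simp
  have uv1: "u < v1" using VV_gt[OF a1 uB] v1_def uB by simp
  have rel: "(a2 - a1) * (v1 - u) = (1 - a2) * (v2 - v1)" using h1 h2 by (simp add: algebra_simps)
  have "0 < (a2 - a1) * (v1 - u)" using a uv1 by simp
  hence E1: "0 < v2 - v1" using rel a by (simp add: zero_less_mult_iff)
  have ch: "(v1 powr (-q) - u powr (-q)) * (v2 - v1) < (v2 powr (-q) - v1 powr (-q)) * (v1 - u)"
    using chord[OF q u(1) uv1 order.refl] E1 by simp
  have "(a2 - a1) * ((v1 powr (-q) - u powr (-q)) * (v2 - v1)) < (a2 - a1) * ((v2 powr (-q) - v1 powr (-q)) * (v1 - u))"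
    using ch a by simp
  also have "\<dots> = (v2 powr (-q) - v1 powr (-q)) * ((a2 - a1) * (v1 - u))"
    by (simp only: mult_ac)
  also have "\<dots> = (v2 powr (-q) - v1 powr (-q)) * ((1 - a2) * (v2 - v1))"
    using rel by simp
  finally have "((a2 - a1) * (v1 powr (-q) - u powr (-q))) * (v2 - v1) < ((1 - a2) * (v2 powr (-q) - v1 powr (-q))) * (v2 - v1)"
    by (simp only: mult_ac)
  hence "(a2 - a1) * (v1 powr (-q) - u powr (-q)) < (1 - a2) * (v2 powr (-q) - v1 powr (-q))"
    using E1 by (simp add: mult_less_cancel_right)
  thus ?thesis unfolding GG_def v1_def[symmetric] v2_def[symmetric] by (simp add: algebra_simps)
qed

lemma GG_B: "0 < a \<Longrightarrow> a < 1 \<Longrightarrow> GG q B a B = B powr (-q)"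
proof -
  assume a: "0 < a" "a < 1"
  have "VV B a B = B" using a by (auto simp: VV_def field_simps)
  thus ?thesis by (simp add: GG_def algebra_simps)
qed

lemma GG_exists:
  assumes q: "q > 0" and B: "B > 0" and a: "0 < a" "a < 1" and g: "\<gamma> > 0" "B powr (-q) \<le> \<gamma>"
  shows "\<exists>u. 0 < u \<and> u \<le> B \<and> GG q B a u = \<gamma>"
proof -
  define r where "r = (a / \<gamma>) powr (1 / q)"
  define u0 where "u0 = min B r"
  have r0: "r > 0" using a g by (simp add: r_def)
  have u00: "u0 > 0" using r0 B by (simp add: u0_def)
  have "r powr (-q) = (a / \<gamma>) powr (- 1)" unfolding r_def powr_powr using q by simp
  also have "\<dots> = \<gamma> / a" using a g by (simp add: powr_minus_divide)
  finally have rq: "r powr (-q) = \<gamma> / a" .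
  have "r powr (-q) \<le> u0 powr (-q)" using powr_mono2'[of "-q" u0 r] q u00 by (simp add: u0_def)
  hence "\<gamma> \<le> a * u0 powr (-q)" using rq a by (simp add: field_simps)
  moreover have "0 \<le> (1 - a) * (VV B a u0) powr (-q)" using a by simp
  ultimately have G0: "\<gamma> \<le> GG q B a u0" by (simp add: GG_def)
  have GB: "GG q B a B \<le> \<gamma>" using GG_B a g by simp
  have uB: "u0 \<le> B" by (simp add: u0_def)
  have cont: "continuous_on {u0..B} (GG q B a)"
  proof -
    have V: "\<And>u. u \<in> {u0..B} \<Longrightarrow> 0 < VV B a u"
      using VV_ge[OF a] B by (metis atLeastAtMost_iff order_less_le_trans)
    have "continuous_on {u0..B} (\<lambda>u. a * u powr (-q) + (1 - a) * ((B - a * u) / (1 - a)) powr (-q))"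
      using V u00 a by (intro continuous_intros) (auto simp: VV_def)
    thus ?thesis by (simp add: GG_def VV_def[abs_def])
  qed
  obtain u where "u0 \<le> u" "u \<le> B" "GG q B a u = \<gamma>"
    using IVT2'[of "GG q B a" B \<gamma> u0, OF GB G0 uB cont] by auto
  thus ?thesis using u00 by (intro exI[of _ u]) auto
qed

lemma omega1_star_eq:
  assumes q: "p + 1 > 0" and B: "1 + \<beta> > 0" and a: "0 < a" "a < 1" and g: "\<gamma> > 0"
    and gB: "(1 + \<beta>) powr (-(p+1)) \<le> \<gamma>"
  shows "0 < omega1_star p \<beta> \<gamma> a \<and> omega1_star p \<beta> \<gamma> a \<le> 1 + \<beta> \<and>
     GG (p + 1) (1 + \<beta>) a (omega1_star p \<beta> \<gamma> a) = \<gamma>"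
proof -
  obtain u where u: "0 < u" "u \<le> 1 + \<beta>" "GG (p + 1) (1 + \<beta>) a u = \<gamma>"
    using GG_exists[OF q B a g gB] by blast
  have S: "omega_system p \<beta> \<gamma> a (fst w) (snd w) \<longleftrightarrow> w = (u, VV (1 + \<beta>) a u)" for w
  proof
    assume "omega_system p \<beta> \<gamma> a (fst w) (snd w)"
    hence w: "0 < fst w" "fst w \<le> 1 + \<beta>" "snd w = VV (1 + \<beta>) a (fst w)"
      "GG (p + 1) (1 + \<beta>) a (fst w) = \<gamma>" using sys_iff[OF a] by auto
    have "fst w = u"
    proof (rule ccontr)
      assume "fst w \<noteq> u"
      hence "fst w < u \<or> u < fst w" by auto
      thus False using GG_dec[OF q a] w u by fastforce
    qed
    thus "w = (u, VV (1 + \<beta>) a u)" using w by (cases w) auto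
  next
    assume "w = (u, VV (1 + \<beta>) a u)"
    thus "omega_system p \<beta> \<gamma> a (fst w) (snd w)" using sys_iff[OF a] u by auto
  qed
  have "omega1_star p \<beta> \<gamma> a = u"
    unfolding omega1_star_def using S by (simp add: the_equality)
  thus ?thesis using u by simp
qed

theorem mainTheorem7:
  fixes p \<beta> \<gamma> :: real
  assumes "p > -1" and "\<beta> \<ge> 0" and "\<gamma> > 0"
    and "p \<ge> 0 \<Longrightarrow> (1 + \<beta>) powr (-p) \<le> \<gamma> \<and> \<gamma> \<le> 1"
    and "p \<le> 0 \<Longrightarrow> 1 \<le> \<gamma> \<and> \<gamma> \<le> (1 + \<beta>) powr (-p)"
  shows "mono_on {0<..<1} (omega1_star p \<beta> \<gamma>)"
proof (rule mono_onI)
  have q: "p + 1 > 0" using assms(1) by simp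
  have B: "1 + \<beta> > 0" "1 \<le> 1 + \<beta>" using assms(2) by auto
  have gB: "(1 + \<beta>) powr (-(p+1)) \<le> \<gamma>"
  proof (cases "p \<ge> 0")
    case True
    have "(1 + \<beta>) powr (-(p+1)) \<le> (1 + \<beta>) powr (-p)" using powr_mono[OF _ B(2)] by simp
    thus ?thesis using assms(4) True by linarith
  next
    case False
    have "(1 + \<beta>) powr (-(p+1)) \<le> (1 + \<beta>) powr 0" using powr_mono[OF _ B(2), of "-(p+1)" 0] q by linarith
    thus ?thesis using assms(5) False B by simp
  qed
  fix r s :: real
  assume r: "r \<in> {0<..<1}" and s: "s \<in> {0<..<1}" and rs: "r \<le> s"
  show "omega1_star p \<beta> \<gamma> r \<le> omega1_star p \<beta> \<gamma> s"
  proof (cases "r = s")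
    case True thus ?thesis by simp
  next
    case False
    hence rs': "r < s" using rs by simp
    have ar: "0 < r" "r < 1" and as: "0 < s" "s < 1" using r s by auto
    note R = omega1_star_eq[OF q B(1) ar assms(3) gB]
    note Sx = omega1_star_eq[OF q B(1) as assms(3) gB]
    show ?thesis
    proof (rule ccontr)
      assume "\<not> ?thesis"
      hence lt: "omega1_star p \<beta> \<gamma> s < omega1_star p \<beta> \<gamma> r" by simp
      have "GG (p+1) (1+\<beta>) s (omega1_star p \<beta> \<gamma> r) < GG (p+1) (1+\<beta>) s (omega1_star p \<beta> \<gamma> s)"
        using GG_dec[OF q as _ lt, of "1+\<beta>"] Sx R by auto
      moreover have "GG (p+1) (1+\<beta>) r (omega1_star p \<beta> \<gamma> r) \<le> GG (p+1) (1+\<beta>) s (omega1_star p \<beta> \<gamma> r)"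
        using GG_mono_a[OF q _ _ ar(1) rs' as(2), of "omega1_star p \<beta> \<gamma> r" "1+\<beta>"] R by blast
      ultimately show False using R Sx by simp
    qed
  qed
qed

end
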